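(* Let $R$ be a ring and $n\in\mathbb{N}$. Then: (1) If $r\in J(R)$, then the unit $1+r$ has exactly one clean decomposition (i.e. exactly one way of writing it as $e+u$ with $e$ idempotent and $u$ a unit). (2) Suppose $U(R)=1+J(R)$. Then $R$ is $n$-torsion clean if and only if $R$ is clean and $U(R)$ has finite exponent $n$; likewise, $R$ is strongly $n$-torsion clean if and only if $R$ is strongly clean and $U(R)$ has finite exponent $n$. Moreover, if $U(R)=1+J(R)$ and one of these equivalent conditions holds, then $R/J(R)$ is a boolean ring.
   Context: All rings are associative with identity. $U(R)$ is the unit group and $J(R)$ the Jacobson radical. A ring is clean (resp. strongly clean) if every element is $e+u$ with $e$ idempotent, $u$ a unit (resp. additionally $eu=ue$). A ring $R$ is (strongly) $n$-torsion clean if every $r\in R$ can be written $r=e+u$ with $e^2=e$, $u\in U(R)$, $u^n=1$ (and $eu=ue$ in the strong case), and $n$ is the smallest natural number with this property. *)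

theory Defs
  imports Main
begin

definition units :: "'a::ring_1 set" where
  "units = {u. \<exists>v. u * v = 1 \<and> v * u = 1}"

definition idem :: "'a::ring_1 \<Rightarrow> bool" where
  "idem e \<longleftrightarrow> e * e = e"

definition left_ideal :: "'a::ring_1 set \<Rightarrow> bool" where
  "left_ideal I \<longleftrightarrow> 0 \<in> I \<and> (\<forall>x\<in>I. \<forall>y\<in>I. x - y \<in> I) \<and> (\<forall>r. \<forall>x\<in>I. r * x \<in> I)"

definition maximal_left_ideal :: "'a::ring_1 set \<Rightarrow> bool" where
  "maximal_left_ideal I \<longleftrightarrow> left_ideal I \<and> I \<noteq> UNIV \<and>
     (\<forall>K. left_ideal K \<and> I \<subseteq> K \<and> K \<noteq> UNIV \<longrightarrow> K = I)"

definition jacobson :: "'a::ring_1 set" where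
  "jacobson = \<Inter> {I. maximal_left_ideal I}"

definition clean_ring :: "'a::ring_1 itself \<Rightarrow> bool" where
  "clean_ring _ \<longleftrightarrow> (\<forall>r::'a. \<exists>e u. idem e \<and> u \<in> units \<and> r = e + u)"

definition strongly_clean_ring :: "'a::ring_1 itself \<Rightarrow> bool" where
  "strongly_clean_ring _ \<longleftrightarrow>
     (\<forall>r::'a. \<exists>e u. idem e \<and> u \<in> units \<and> e * u = u * e \<and> r = e + u)"

definition tc_prop :: "'a::ring_1 itself \<Rightarrow> nat \<Rightarrow> bool" where
  "tc_prop _ n \<longleftrightarrow> (\<forall>r::'a. \<exists>e u. idem e \<and> u \<in> units \<and> u ^ n = 1 \<and> r = e + u)"

definition stc_prop :: "'a::ring_1 itself \<Rightarrow> nat \<Rightarrow> bool" where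
  "stc_prop _ n \<longleftrightarrow> (\<forall>r::'a. \<exists>e u. idem e \<and> u \<in> units \<and> u ^ n = 1 \<and> e * u = u * e \<and> r = e + u)"

definition n_torsion_clean :: "'a::ring_1 itself \<Rightarrow> nat \<Rightarrow> bool" where
  "n_torsion_clean T n \<longleftrightarrow> 1 \<le> n \<and> tc_prop T n \<and> (\<forall>m. 1 \<le> m \<and> m < n \<longrightarrow> \<not> tc_prop T m)"

definition strongly_n_torsion_clean :: "'a::ring_1 itself \<Rightarrow> nat \<Rightarrow> bool" where
  "strongly_n_torsion_clean T n \<longleftrightarrow> 1 \<le> n \<and> stc_prop T n \<and> (\<forall>m. 1 \<le> m \<and> m < n \<longrightarrow> \<not> stc_prop T m)"

definition units_exponent :: "'a::ring_1 itself \<Rightarrow> nat \<Rightarrow> bool" where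
  "units_exponent _ n \<longleftrightarrow> 1 \<le> n \<and> (\<forall>u::'a\<in>units. u ^ n = 1) \<and>
     (\<forall>m. 1 \<le> m \<and> m < n \<longrightarrow> \<not> (\<forall>u::'a\<in>units. u ^ m = 1))"

text \<open>R/J(R) is boolean: every coset x + J(R) is idempotent, i.e. x*x - x \<in> J(R).\<close>
definition boolean_mod_jacobson :: "'a::ring_1 itself \<Rightarrow> bool" where
  "boolean_mod_jacobson _ \<longleftrightarrow> (\<forall>x::'a. x * x - x \<in> jacobson)"

end

theory Submission
  imports Defs
begin

lemma jac_iff: "x \<in> jacobson \<longleftrightarrow> (\<forall>I. maximal_left_ideal I \<longrightarrow> x \<in> I)"
  unfolding jacobson_def by auto

lemma max_li: "maximal_left_ideal I \<Longrightarrow> left_ideal (I::'a::ring_1 set)"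
  unfolding maximal_left_ideal_def by (erule conjunct1)

lemma left_ideal_jac: "left_ideal (jacobson :: 'a::ring_1 set)"
proof -
  have a: "(0::'a) \<in> jacobson" unfolding jac_iff
    using max_li unfolding left_ideal_def by blast
  have b: "x - y \<in> (jacobson::'a set)" if "x \<in> jacobson" "y \<in> jacobson" for x y
    unfolding jac_iff
  proof (intro allI impI)
    fix I :: "'a set" assume I: "maximal_left_ideal I"
    have "x \<in> I" "y \<in> I" using that I jac_iff by blast+
    then show "x - y \<in> I" using max_li[OF I] unfolding left_ideal_def by blast
  qed
  have c: "r * x \<in> (jacobson::'a set)" if "x \<in> jacobson" for x r
    unfolding jac_iff
  proof (intro allI impI)
    fix I :: "'a set" assume I: "maximal_left_ideal I"
    have "x \<in> I" using that I jac_iff by blast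
    then show "r * x \<in> I" using max_li[OF I] unfolding left_ideal_def by blast
  qed
  show ?thesis unfolding left_ideal_def using a b c by blast
qed

lemma jac_diff: "x \<in> jacobson \<Longrightarrow> y \<in> jacobson \<Longrightarrow> x - y \<in> (jacobson :: 'a::ring_1 set)"
  using left_ideal_jac unfolding left_ideal_def by blast

lemma jac_0: "(0::'a::ring_1) \<in> jacobson"
  using left_ideal_jac unfolding left_ideal_def by blast

lemma jac_lmult: "x \<in> jacobson \<Longrightarrow> r * x \<in> (jacobson :: 'a::ring_1 set)"
  using left_ideal_jac unfolding left_ideal_def by blast

lemma jac_uminus: "x \<in> jacobson \<Longrightarrow> - x \<in> (jacobson :: 'a::ring_1 set)"
  using jac_diff[OF jac_0, of x] by simp

lemma jac_add: "x \<in> jacobson \<Longrightarrow> y \<in> jacobson \<Longrightarrow> x + y \<in> (jacobson :: 'a::ring_1 set)"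
  using jac_diff[of x "-y"] jac_uminus[of y] by simp

lemma chain_union:
  fixes C :: "'a::ring_1 set set"
  assumes ne: "C \<noteq> {}" and ch: "\<forall>X\<in>C. \<forall>Y\<in>C. X \<subseteq> Y \<or> Y \<subseteq> X"
    and li: "\<forall>X\<in>C. left_ideal X \<and> 1 \<notin> X"
  shows "left_ideal (\<Union>C) \<and> 1 \<notin> \<Union>C"
proof -
  have "0 \<in> \<Union>C" using ne li unfolding left_ideal_def by blast
  moreover have "x - y \<in> \<Union>C" if xy: "x \<in> \<Union>C" "y \<in> \<Union>C" for x y
  proof -
    obtain X Y where XY: "X \<in> C" "Y \<in> C" "x \<in> X" "y \<in> Y" using xy by blast
    show ?thesis
    proof (cases "X \<subseteq> Y")
      case True
      then show ?thesis using XY li unfolding left_ideal_def by blast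
    next
      case False
      then have "Y \<subseteq> X" using ch XY by blast
      then show ?thesis using XY li unfolding left_ideal_def by blast
    qed
  qed
  moreover have "r * x \<in> \<Union>C" if "x \<in> \<Union>C" for r x
    using that li unfolding left_ideal_def by blast
  ultimately show ?thesis using li unfolding left_ideal_def by blast
qed

lemma exists_maximal:
  fixes I :: "'a::ring_1 set"
  assumes "left_ideal I" "1 \<notin> I"
  shows "\<exists>M. maximal_left_ideal M \<and> I \<subseteq> M"
proof -
  define A where "A = {K. left_ideal K \<and> I \<subseteq> K \<and> (1::'a) \<notin> K}"
  have "\<forall>C\<in>chains A. \<exists>U\<in>A. \<forall>X\<in>C. X \<subseteq> U"
  proof
    fix C assume C: "C \<in> chains A"
    show "\<exists>U\<in>A. \<forall>X\<in>C. X \<subseteq> U"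
    proof (cases "C = {}")
      case True
      then show ?thesis using assms unfolding A_def by auto
    next
      case False
      have sub: "C \<subseteq> A" and ch: "\<forall>X\<in>C. \<forall>Y\<in>C. X \<subseteq> Y \<or> Y \<subseteq> X"
        using C unfolding chains_def chain_subset_def by auto
      have "left_ideal (\<Union>C) \<and> 1 \<notin> \<Union>C"
        using chain_union[OF False ch] sub unfolding A_def by auto
      moreover have "I \<subseteq> \<Union>C" using False sub unfolding A_def by auto
      ultimately show ?thesis unfolding A_def by auto
    qed
  qed
  from Zorn_Lemma2[OF this] obtain M where M: "M \<in> A" "\<forall>X\<in>A. M \<subseteq> X \<longrightarrow> X = M" by blast
  have "maximal_left_ideal M"
    unfolding maximal_left_ideal_def
  proof (intro conjI allI impI)
    show "left_ideal M" using M unfolding A_def by auto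
    show "M \<noteq> UNIV" using M unfolding A_def by auto
    fix K assume K: "left_ideal K \<and> M \<subseteq> K \<and> K \<noteq> UNIV"
    have "1 \<notin> K"
    proof
      assume "1 \<in> K"
      then have "r * 1 \<in> K" for r using K unfolding left_ideal_def by blast
      then show False using K by auto
    qed
    then have "K \<in> A" using K M unfolding A_def by auto
    then show "K = M" using M K by blast
  qed
  then show ?thesis using M unfolding A_def by auto
qed

lemma left_inv:
  fixes x :: "'a::ring_1"
  assumes "x \<in> jacobson"
  shows "\<exists>a. a * (1 + x) = 1"
proof (rule ccontr)
  assume na: "\<not> ?thesis"
  define I where "I = {r * (1 + x) | r. True}"
  have li: "left_ideal I" unfolding left_ideal_def I_def
  proof (intro conjI ballI allI)
    show "0 \<in> {r * (1 + x) |r. True}" by (rule CollectI, rule exI[of _ 0]) simp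
    fix y z assume "y \<in> {r * (1 + x) |r. True}" "z \<in> {r * (1 + x) |r. True}"
    then obtain a b where "y = a * (1+x)" "z = b * (1+x)" by blast
    then have "y - z = (a - b) * (1 + x)" by (simp add: algebra_simps)
    then show "y - z \<in> {r * (1 + x) |r. True}" by blast
  next
    fix r y assume "y \<in> {r * (1 + x) |r. True}"
    then obtain a where "y = a * (1+x)" by blast
    then have "r * y = (r * a) * (1 + x)" by (simp add: algebra_simps)
    then show "r * y \<in> {r * (1 + x) |r. True}" by blast
  qed
  have "1 \<notin> I" using na unfolding I_def by auto
  then obtain M where M: "maximal_left_ideal M" "I \<subseteq> M" using exists_maximal li by blast
  have "1 * (1 + x) \<in> I" unfolding I_def by blast
  then have "1 + x \<in> M" using M by auto
  moreover have "x \<in> M" using assms M jac_iff by blast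
  ultimately have "(1 + x) - x \<in> M" using max_li[OF M(1)] unfolding left_ideal_def by blast
  then have "1 \<in> M" by simp
  then have "r * 1 \<in> M" for r using max_li[OF M(1)] unfolding left_ideal_def by blast
  then have "M = UNIV" by auto
  then show False using M(1) unfolding maximal_left_ideal_def by (elim conjE) simp
qed

lemma jac_unit:
  fixes x :: "'a::ring_1"
  assumes "x \<in> jacobson"
  shows "1 + x \<in> units"
proof -
  obtain a where a: "a * (1 + x) = 1" using left_inv assms by blast
  have "a = 1 + (- (a * x))" using a by (simp add: algebra_simps)
  moreover have "- (a * x) \<in> jacobson" using jac_uminus jac_lmult assms by blast
  ultimately obtain b where b: "b * a = 1" using left_inv by metis
  have "b = b * (a * (1 + x))" using a by simp
  also have "\<dots> = 1 + x" using b by (simp add: mult.assoc[symmetric])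
  finally have "(1 + x) * a = 1" using b by simp
  then show ?thesis using a unfolding units_def by blast
qed

lemma units_mult: "u \<in> units \<Longrightarrow> v \<in> units \<Longrightarrow> u * v \<in> (units :: 'a::ring_1 set)"
proof -
  assume "u \<in> units" "v \<in> units"
  then obtain u' v' where "u * u' = 1" "u' * u = 1" "v * v' = 1" "v' * v = 1"
    unfolding units_def by blast
  then have "(u * v) * (v' * u') = 1" "(v' * u') * (u * v) = 1"
    by (simp_all add: mult.assoc, simp_all add: mult.assoc[symmetric])
  then show ?thesis unfolding units_def by blast
qed

lemma idem_unit: "idem e \<Longrightarrow> e \<in> units \<Longrightarrow> e = (1::'a::ring_1)"
proof -
  assume "idem e" "e \<in> units"
  then obtain w where w: "w * e = 1" and ee: "e * e = e" unfolding units_def idem_def by blast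
  have "w * (e * e) = w * e" using ee by simp
  then have "(w * e) * e = w * e" by (simp add: mult.assoc)
  then have "1 * e = 1" using w by simp
  then show ?thesis by simp
qed

lemma decomp_unique:
  fixes r :: "'a::ring_1"
  assumes r: "r \<in> jacobson" and e: "idem e" and u: "u \<in> units" and eq: "1 + r = e + u"
  shows "e = 0 \<and> u = 1 + r"
proof -
  obtain v where v: "u * v = 1" "v * u = 1" using u unfolding units_def by blast
  have "1 + (- (v * r)) \<in> units" using jac_unit jac_uminus jac_lmult r by blast
  then have "u * (1 + (- (v * r))) \<in> units" using units_mult u by blast
  moreover have "u * (1 + (- (v * r))) = u - r"
    using v by (simp add: algebra_simps mult.assoc[symmetric])
  moreover have "u - r = 1 - e" using eq by (simp add: algebra_simps)
  ultimately have "1 - e \<in> units" by simp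
  moreover have "idem (1 - e)" using e unfolding idem_def by (simp add: algebra_simps)
  ultimately have "1 - e = 1" using idem_unit by blast
  then have "e = 0" by simp
  then show ?thesis using eq by simp
qed

lemma jac_rmult:
  fixes j a :: "'a::ring_1"
  assumes H: "(units :: 'a set) = (\<lambda>j. 1 + j) ` jacobson" and j: "j \<in> jacobson"
  shows "j * a \<in> jacobson"
proof -
  have "1 + a * j \<in> units" using jac_unit jac_lmult j by blast
  then obtain w where w: "(1 + a * j) * w = 1" "w * (1 + a * j) = 1" unfolding units_def by blast
  have "(1 + j * a) * (1 - j * w * a) = 1 + j * a - j * ((1 + a * j) * w) * a"
    by (simp add: algebra_simps mult.assoc)
  also have "\<dots> = 1" using w by simp
  finally have l: "(1 + j * a) * (1 - j * w * a) = 1" .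
  have "(1 - j * w * a) * (1 + j * a) = 1 + j * a - j * (w * (1 + a * j)) * a"
    by (simp add: algebra_simps mult.assoc)
  also have "\<dots> = 1" using w by simp
  finally have r: "(1 - j * w * a) * (1 + j * a) = 1" .
  have "1 + j * a \<in> units" using l r unfolding units_def by blast
  then have "1 + j * a \<in> (\<lambda>j. 1 + j) ` jacobson" using H by simp
  then obtain k where k: "k \<in> jacobson" "1 + j * a = 1 + k" by (rule imageE)
  then show ?thesis by simp
qed

lemma pow_all:
  fixes m :: nat
  assumes H: "(units :: 'a::ring_1 set) = (\<lambda>j. 1 + j) ` jacobson"
    and tc: "\<forall>r::'a. \<exists>e u. idem e \<and> u \<in> units \<and> u ^ m = 1 \<and> r = e + u"
  shows "\<forall>u::'a\<in>units. u ^ m = 1"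
proof
  fix u :: 'a assume "u \<in> units"
  then obtain j where j: "j \<in> jacobson" "u = 1 + j" using H by auto
  obtain e v where ev: "idem e" "v \<in> units" "v ^ m = 1" "u = e + v" using tc by blast
  have "v = 1 + j" using decomp_unique[OF j(1) ev(1) ev(2)] j ev by simp
  then show "u ^ m = 1" using j ev by simp
qed

lemma tc_iff:
  assumes H: "(units :: 'a::ring_1 set) = (\<lambda>j. 1 + j) ` jacobson"
  shows "tc_prop TYPE('a) m \<longleftrightarrow> clean_ring TYPE('a) \<and> (\<forall>u::'a\<in>units. u ^ m = 1)"
proof
  assume a: "tc_prop TYPE('a) m"
  then have "clean_ring TYPE('a)" unfolding tc_prop_def clean_ring_def by blast
  moreover have "\<forall>u::'a\<in>units. u ^ m = 1" using pow_all[OF H] a unfolding tc_prop_def by blast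
  ultimately show "clean_ring TYPE('a) \<and> (\<forall>u::'a\<in>units. u ^ m = 1)" by blast
next
  assume "clean_ring TYPE('a) \<and> (\<forall>u::'a\<in>units. u ^ m = 1)"
  then show "tc_prop TYPE('a) m" unfolding tc_prop_def clean_ring_def by blast
qed

lemma stc_iff:
  assumes H: "(units :: 'a::ring_1 set) = (\<lambda>j. 1 + j) ` jacobson"
  shows "stc_prop TYPE('a) m \<longleftrightarrow> strongly_clean_ring TYPE('a) \<and> (\<forall>u::'a\<in>units. u ^ m = 1)"
proof
  assume a: "stc_prop TYPE('a) m"
  then have "strongly_clean_ring TYPE('a)" unfolding stc_prop_def strongly_clean_ring_def by blast
  moreover have "\<forall>r::'a. \<exists>e u. idem e \<and> u \<in> units \<and> u ^ m = 1 \<and> r = e + u"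
    using a unfolding stc_prop_def by blast
  then have "\<forall>u::'a\<in>units. u ^ m = 1" using pow_all[OF H] by blast
  ultimately show "strongly_clean_ring TYPE('a) \<and> (\<forall>u::'a\<in>units. u ^ m = 1)" by blast
next
  assume "strongly_clean_ring TYPE('a) \<and> (\<forall>u::'a\<in>units. u ^ m = 1)"
  then show "stc_prop TYPE('a) m" unfolding stc_prop_def strongly_clean_ring_def by blast
qed

lemma boolean:
  assumes H: "(units :: 'a::ring_1 set) = (\<lambda>j. 1 + j) ` jacobson"
    and c: "clean_ring TYPE('a)"
  shows "boolean_mod_jacobson TYPE('a)"
  unfolding boolean_mod_jacobson_def
proof
  fix x :: 'a
  have "(-1::'a) \<in> units" unfolding units_def by (rule CollectI, rule exI[of _ "-1"]) simp
  then obtain k where k: "k \<in> jacobson" "(-1::'a) = 1 + k" using H by auto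
  have "k = (1 + k) - 1" by simp
  also have "\<dots> = -1 - 1" using k by simp
  also have "\<dots> = - 2" by simp
  finally have "k = - 2" .
  then have two: "(2::'a) \<in> jacobson" using jac_uminus[OF k(1)] by simp
  obtain e u where eu: "idem e" "u \<in> units" "x = e + u" using c unfolding clean_ring_def by blast
  then obtain j where j: "j \<in> jacobson" "u = 1 + j" using H by auto
  have ee: "e * e = e" using eu unfolding idem_def by simp
  have "x * x - x = (e + 1 + j) * (e + 1 + j) - (e + 1 + j)" using eu j by (simp add: add.assoc)
  also have "\<dots> = e * e + e * 2 - e + j + e * j + j * e + j * j"
    by (simp add: algebra_simps mult_2_right)
  also have "\<dots> = e * 2 + j + e * j + j * e + j * j" using ee by simp
  finally have eq: "x * x - x = e * 2 + j + e * j + j * e + j * j" .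
  have "e * 2 \<in> jacobson" using jac_lmult two by blast
  moreover have "e * j \<in> jacobson" "j * j \<in> jacobson" using jac_lmult j by blast+
  moreover have "j * e \<in> jacobson" using jac_rmult[OF H j(1)] by blast
  ultimately show "x * x - x \<in> jacobson" unfolding eq using j(1) jac_add by metis
qed

theorem proposition1p2:
  fixes n :: nat
  shows "(\<forall>r::'a::ring_1. r \<in> jacobson \<longrightarrow>
            (\<exists>!p::'a \<times> 'a. idem (fst p) \<and> snd p \<in> units \<and> 1 + r = fst p + snd p))
       \<and> ((units :: 'a set) = (\<lambda>j. 1 + j) ` jacobson \<longrightarrow>
           (n_torsion_clean TYPE('a) n \<longleftrightarrow> clean_ring TYPE('a) \<and> units_exponent TYPE('a) n)
         \<and> (strongly_n_torsion_clean TYPE('a) n \<longleftrightarrow>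
              strongly_clean_ring TYPE('a) \<and> units_exponent TYPE('a) n)
         \<and> ((n_torsion_clean TYPE('a) n \<or> (clean_ring TYPE('a) \<and> units_exponent TYPE('a) n)
             \<or> strongly_n_torsion_clean TYPE('a) n
             \<or> (strongly_clean_ring TYPE('a) \<and> units_exponent TYPE('a) n))
            \<longrightarrow> boolean_mod_jacobson TYPE('a)))"
proof (intro conjI allI impI)
  fix r :: 'a assume r: "r \<in> jacobson"
  show "\<exists>!p::'a \<times> 'a. idem (fst p) \<and> snd p \<in> units \<and> 1 + r = fst p + snd p"
  proof (rule ex1I[of _ "(0, 1 + r)"])
    show "idem (fst (0::'a, 1 + r)) \<and> snd (0::'a, 1 + r) \<in> units \<and> 1 + r = fst (0::'a, 1 + r) + snd (0::'a, 1 + r)"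
      using jac_unit[OF r] unfolding idem_def by simp
  next
    fix p :: "'a \<times> 'a" assume "idem (fst p) \<and> snd p \<in> units \<and> 1 + r = fst p + snd p"
    then have "fst p = 0 \<and> snd p = 1 + r" using decomp_unique r by blast
    then show "p = (0, 1 + r)" by (simp add: prod_eq_iff)
  qed
next
  assume H: "(units :: 'a set) = (\<lambda>j. 1 + j) ` jacobson"
  note tc = tc_iff[OF H] and stc = stc_iff[OF H]
  show A: "n_torsion_clean TYPE('a) n \<longleftrightarrow> clean_ring TYPE('a) \<and> units_exponent TYPE('a) n"
    unfolding n_torsion_clean_def units_exponent_def tc by blast
  show B: "strongly_n_torsion_clean TYPE('a) n \<longleftrightarrow>
              strongly_clean_ring TYPE('a) \<and> units_exponent TYPE('a) n"
    unfolding strongly_n_torsion_clean_def units_exponent_def stc by blast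
  assume "n_torsion_clean TYPE('a) n \<or> (clean_ring TYPE('a) \<and> units_exponent TYPE('a) n)
             \<or> strongly_n_torsion_clean TYPE('a) n
             \<or> (strongly_clean_ring TYPE('a) \<and> units_exponent TYPE('a) n)"
  then have "clean_ring TYPE('a)" using A B unfolding strongly_clean_ring_def clean_ring_def by blast
  then show "boolean_mod_jacobson TYPE('a)" using boolean[OF H] by blast
qed

end
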